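(* Let $\mu$ be a shift-invariant Borel probability measure on $\Sigma^\mathbb{Z}$ and for $c,d\in\mathtt{CA}$ define $\delta^\mu_B(c,d)=\int_{\Sigma^\mathbb{Z}}d_B(c(x),d(x))\,d\mu(x)$. Then $\delta^\mu_B(c,d)=\delta^\mu(c,d)$ for all $c,d\in\mathtt{CA}$.
   Context: $\Sigma$ is a finite alphabet with $|\Sigma|\ge2$. A cellular automaton (CA) is a continuous map $\Sigma^\mathbb{Z}\to\Sigma^\mathbb{Z}$ commuting with the shift $\sigma(x)_i=x_{i+1}$; $\mathtt{CA}$ is the set of all CA. The Besicovitch distance is $d_B(x,y)=\limsup_{n\to\infty}\frac{|\{i:|i|\le n,\ x_i\ne y_i\}|}{2n+1}$. $\mu$ is shift-invariant if $\mu(\sigma(C))=\mu(C)$ for all Borel $C$. $\delta^\mu(c,d)=\mu(\{x\mid c(x)_0\ne d(x)_0\})$. *)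

theory Defs
  imports "HOL-Probability.Probability"
begin

definition shift_top :: "(int \<Rightarrow> 'a) topology" where
  "shift_top = product_topology (\<lambda>_. discrete_topology UNIV) UNIV"

definition shift :: "(int \<Rightarrow> 'a) \<Rightarrow> (int \<Rightarrow> 'a)" where
  "shift x = (\<lambda>i. x (i + 1))"

definition is_CA :: "((int \<Rightarrow> 'a) \<Rightarrow> (int \<Rightarrow> 'a)) \<Rightarrow> bool" where
  "is_CA F \<longleftrightarrow> continuous_map shift_top shift_top F \<and> (\<forall>x. F (shift x) = shift (F x))"

definition shift_borel :: "(int \<Rightarrow> 'a) set set" where
  "shift_borel = sigma_sets UNIV {U. openin shift_top U}"

definition besicovitch :: "(int \<Rightarrow> 'a) \<Rightarrow> (int \<Rightarrow> 'a) \<Rightarrow> real" where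
  "besicovitch x y = real_of_ereal (limsup (\<lambda>n::nat.
      ereal (real (card {i::int. \<bar>i\<bar> \<le> int n \<and> x i \<noteq> y i}) / (2 * real n + 1))))"

definition shift_invariant :: "(int \<Rightarrow> 'a) measure \<Rightarrow> bool" where
  "shift_invariant M \<longleftrightarrow> (\<forall>C \<in> sets M. emeasure M (shift ` C) = emeasure M C)"

end

theory Submission
  imports Defs
begin


definition Lsup :: "(nat \<Rightarrow> real) \<Rightarrow> real" where
  "Lsup u = real_of_ereal (limsup (\<lambda>n. ereal (u n)))"

lemma Lsup_ereal:
  assumes "\<And>n. 0 \<le> u n \<and> u n \<le> 1"
  shows "limsup (\<lambda>n. ereal (u n)) = ereal (Lsup u)" "0 \<le> Lsup u" "Lsup u \<le> 1"
proof -
  have a: "limsup (\<lambda>n. ereal (u n)) \<le> ereal 1"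
    by (rule Limsup_bounded) (use assms in auto)
  have b: "ereal 0 \<le> limsup (\<lambda>n. ereal (u n))"
    by (rule le_Limsup) (use assms in auto)
  from a b obtain r where r: "limsup (\<lambda>n. ereal (u n)) = ereal r" "0 \<le> r" "r \<le> 1"
    by (cases "limsup (\<lambda>n. ereal (u n))") auto
  then show "limsup (\<lambda>n. ereal (u n)) = ereal (Lsup u)" "0 \<le> Lsup u" "Lsup u \<le> 1"
    by (auto simp: Lsup_def)
qed

lemma Lsup_le:
  assumes "\<And>n. 0 \<le> u n \<and> u n \<le> 1" and "eventually (\<lambda>n. u n \<le> C) sequentially"
  shows "Lsup u \<le> C"
proof -
  have "limsup (\<lambda>n. ereal (u n)) \<le> ereal C"
    by (rule Limsup_bounded) (use assms(2) in \<open>auto elim: eventually_mono\<close>)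
  then show ?thesis using Lsup_ereal(1)[OF assms(1)] by simp
qed

lemma Lsup_less:
  assumes "\<And>n. 0 \<le> u n \<and> u n \<le> 1" and "Lsup u < C"
  shows "eventually (\<lambda>n. u n < C) sequentially"
proof -
  have "limsup (\<lambda>n. ereal (u n)) < ereal C" using Lsup_ereal(1)[OF assms(1)] assms(2) by simp
  from Limsup_lessD[OF this] show ?thesis by (auto elim: eventually_mono)
qed

lemma Lsup_mono_approx:
  assumes "\<And>n. 0 \<le> u n \<and> u n \<le> 1" "\<And>n. 0 \<le> v n \<and> v n \<le> 1"
    and "\<And>e. e > 0 \<Longrightarrow> eventually (\<lambda>n. u n \<le> v n + e) sequentially"
  shows "Lsup u \<le> Lsup v"
proof (rule field_le_epsilon)
  fix e :: real assume e: "e > 0"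
  have "eventually (\<lambda>n. v n < Lsup v + e/2) sequentially"
    by (rule Lsup_less[OF assms(2)]) (use e in simp)
  moreover have "eventually (\<lambda>n. u n \<le> v n + e/2) sequentially" using assms(3) e by simp
  ultimately have "eventually (\<lambda>n. u n \<le> Lsup v + e) sequentially"
    by eventually_elim simp
  then show "Lsup u \<le> Lsup v + e" by (rule Lsup_le[OF assms(1)])
qed

lemma Lsup_sum_ge1:
  assumes "\<And>n. 0 \<le> u n \<and> u n \<le> 1" "\<And>n. 0 \<le> v n \<and> v n \<le> 1"
    and "\<And>n. u n + v n = 1"
  shows "1 \<le> Lsup u + Lsup v"
proof (rule ccontr)
  assume "\<not> ?thesis"
  then obtain e where e: "e > 0" "Lsup u + Lsup v + 2 * e = 1"
    by (intro that[of "(1 - Lsup u - Lsup v)/2"]) (auto simp: field_simps)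
  have "eventually (\<lambda>n. u n < Lsup u + e) sequentially"
    by (rule Lsup_less[OF assms(1)]) (use e in simp)
  moreover have "eventually (\<lambda>n. v n < Lsup v + e) sequentially"
    by (rule Lsup_less[OF assms(2)]) (use e in simp)
  ultimately have "eventually (\<lambda>n. False) sequentially"
  proof eventually_elim
    case (elim n)
    then show False using assms(3)[of n] e by linarith
  qed
  then show False by simp
qed


lemma sum_lessThan_add': "(\<Sum>i<k+m. f i) = (\<Sum>i<k. f i) + (\<Sum>i<m. f (k+i))"
  for f :: "nat \<Rightarrow> real"
  by (induction m) (auto simp: add.commute)

lemma funpow_inv:
  assumes "\<And>x. c (T x) = c x" shows "c ((T ^^ k) x) = c x"
  by (induction k) (auto simp: assms)

lemma block:
  fixes \<phi> c :: "'x \<Rightarrow> real" and T :: "'x \<Rightarrow> 'x" and N :: nat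
  assumes phi: "\<And>x. \<phi> x \<ge> 0" and cpos: "\<And>x. c x \<ge> 0" and cinv: "\<And>x. c (T x) = c x"
    and ex: "\<And>x. \<exists>k. 1 \<le> k \<and> k \<le> N \<and> (\<Sum>i<k. \<phi> ((T^^i) x)) \<ge> real k * c x"
  shows "(\<Sum>i<L. \<phi> ((T^^i) x)) \<ge> (real L - real N) * c x"
proof (induction L arbitrary: x rule: less_induct)
  case (less L)
  show ?case
  proof (cases "L \<le> N")
    case True
    have "(real L - real N) * c x \<le> 0" using True cpos[of x] by (simp add: mult_nonpos_nonneg)
    also have "0 \<le> (\<Sum>i<L. \<phi> ((T^^i) x))" by (rule sum_nonneg) (use phi in auto)
    finally show ?thesis .
  next
    case False
    obtain k where k: "1 \<le> k" "k \<le> N" "(\<Sum>i<k. \<phi> ((T^^i) x)) \<ge> real k * c x" using ex by blast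
    define y where "y = (T^^k) x"
    have IH: "(\<Sum>i<L-k. \<phi> ((T^^i) y)) \<ge> (real (L-k) - real N) * c y"
      using less.IH[of "L-k" y] k False by auto
    have cy: "c y = c x" unfolding y_def by (rule funpow_inv[of c T, OF cinv])
    have split: "(\<Sum>i<L. \<phi> ((T^^i) x)) = (\<Sum>i<k. \<phi> ((T^^i) x)) + (\<Sum>i<L-k. \<phi> ((T^^i) y))"
    proof -
      have L: "L = k + (L - k)" using False k by simp
      have "(\<Sum>i<L. \<phi> ((T^^i) x)) = (\<Sum>i<k + (L-k). \<phi> ((T^^i) x))" using L by simp
      also have "\<dots> = (\<Sum>i<k. \<phi> ((T^^i) x)) + (\<Sum>i<L-k. \<phi> ((T^^(k+i)) x))"
        by (rule sum_lessThan_add')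
      also have "(\<Sum>i<L-k. \<phi> ((T^^(k+i)) x)) = (\<Sum>i<L-k. \<phi> ((T^^i) y))"
        unfolding y_def by (simp add: funpow_add add.commute)
      finally show ?thesis .
    qed
    have "real (L - k) = real L - real k" using False k by simp
    then show ?thesis using split IH cy k(3) by (simp add: algebra_simps)
  qed
qed


definition avg :: "('x \<Rightarrow> 'x) \<Rightarrow> ('x \<Rightarrow> real) \<Rightarrow> 'x \<Rightarrow> nat \<Rightarrow> real" where
  "avg T g x n = (\<Sum>i<n. g ((T^^i) x)) / real n"

lemma avg_bounds:
  assumes "\<And>x. 0 \<le> g x \<and> g x \<le> 1"
  shows "0 \<le> avg T g x n \<and> avg T g x n \<le> 1"
proof -
  have "(\<Sum>i<n. g ((T^^i) x)) \<le> (\<Sum>i<n. 1)" by (rule sum_mono) (use assms in auto)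
  moreover have "0 \<le> (\<Sum>i<n. g ((T^^i) x))" by (rule sum_nonneg) (use assms in auto)
  ultimately show ?thesis unfolding avg_def by (auto simp: divide_le_eq)
qed

lemma avg_shift:
  assumes "\<And>x. 0 \<le> g x \<and> g x \<le> 1"
  shows "\<bar>avg T g (T x) n - avg T g x n\<bar> \<le> 1 / real n"
proof -
  have a: "(\<Sum>i<n. g ((T^^i) (T x))) + g x = (\<Sum>i<n. g ((T^^i) x)) + g ((T^^n) x)"
  proof -
    have "(\<Sum>i<n. g ((T^^i) (T x))) = (\<Sum>i<n. g ((T^^Suc i) x))"
      by (simp add: funpow_Suc_right del: funpow.simps)
    then have "(\<Sum>i<n. g ((T^^i) (T x))) + g x = (\<Sum>i<Suc n. g ((T^^i) x))"
      by (subst sum.lessThan_Suc_shift) simp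
    also have "\<dots> = (\<Sum>i<n. g ((T^^i) x)) + g ((T^^n) x)" by simp
    finally show ?thesis .
  qed
  have "\<bar>(\<Sum>i<n. g ((T^^i) (T x))) - (\<Sum>i<n. g ((T^^i) x))\<bar> \<le> 1"
    using a assms[of x] assms[of "(T^^n) x"] by linarith
  then show ?thesis unfolding avg_def
    by (cases "n = 0") (auto simp: diff_divide_distrib[symmetric] abs_divide divide_right_mono)
qed

lemma Lsup_avg_inv:
  assumes g: "\<And>x. 0 \<le> g x \<and> g x \<le> 1"
  shows "Lsup (avg T g (T x)) = Lsup (avg T g x)"
proof -
  have ev: "eventually (\<lambda>n. \<bar>avg T g (T x) n - avg T g x n\<bar> \<le> e) sequentially" if "e > 0" for e
  proof -
    have "eventually (\<lambda>n. 1 / real n < e) sequentially"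
      using order_tendstoD(2)[OF lim_const_over_n[of 1] that] by simp
    then show ?thesis
    proof eventually_elim
      case (elim n)
      then show ?case using avg_shift[of g T x n] g by smt
    qed
  qed
  show ?thesis
  proof (rule antisym)
    show "Lsup (avg T g (T x)) \<le> Lsup (avg T g x)"
      by (rule Lsup_mono_approx[OF avg_bounds[OF g] avg_bounds[OF g]])
         (use ev in \<open>force elim: eventually_mono\<close>)
    show "Lsup (avg T g x) \<le> Lsup (avg T g (T x))"
      by (rule Lsup_mono_approx[OF avg_bounds[OF g] avg_bounds[OF g]])
         (use ev in \<open>force elim: eventually_mono\<close>)
  qed
qed

lemma Lsup_avg_ex:
  assumes g: "\<And>x. 0 \<le> g x \<and> g x \<le> 1" and e: "e > 0"
  shows "\<exists>n\<ge>1. avg T g x n \<ge> Lsup (avg T g x) - e"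
proof (rule ccontr)
  assume "\<not> ?thesis"
  then have "eventually (\<lambda>n. avg T g x n \<le> Lsup (avg T g x) - e) sequentially"
    by (intro eventually_sequentiallyI[of 1]) auto
  then have "Lsup (avg T g x) \<le> Lsup (avg T g x) - e" by (rule Lsup_le[OF avg_bounds[OF g]])
  then show False using e by simp
qed


context prob_space
begin

lemma bint:
  fixes f :: "'a \<Rightarrow> real"
  assumes "f \<in> borel_measurable M" "\<And>x. \<bar>f x\<bar> \<le> B"
  shows "integrable M f"
  by (rule integrable_const_bound[where B=B]) (use assms in auto)

lemma integral_funpow:
  fixes f :: "'a \<Rightarrow> real"
  assumes T: "T \<in> M \<rightarrow>\<^sub>M M" and pres: "distr M M T = M" and f: "f \<in> borel_measurable M"
  shows "(\<integral>x. f ((T^^i) x) \<partial>M) = (\<integral>x. f x \<partial>M)"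
proof (induction i)
  case 0 then show ?case by simp
next
  case (Suc i)
  have m: "(\<lambda>x. f ((T^^i) x)) \<in> borel_measurable M"
    using measurable_compose[OF measurable_compose_n[OF T] f] by (simp add: comp_def)
  have "(\<integral>x. f ((T^^Suc i) x) \<partial>M) = (\<integral>x. (\<lambda>y. f ((T^^i) y)) (T x) \<partial>M)"
    by (simp add: funpow_Suc_right del: funpow.simps)
  also have "\<dots> = (\<integral>y. f ((T^^i) y) \<partial>distr M M T)"
    by (rule integral_distr[OF T m, symmetric])
  also have "\<dots> = (\<integral>y. f ((T^^i) y) \<partial>M)" using pres by simp
  finally show ?case using Suc by simp
qed

lemma avg_meas:
  assumes T: "T \<in> M \<rightarrow>\<^sub>M M" and g: "g \<in> borel_measurable M"
  shows "(\<lambda>x. avg T g x n) \<in> borel_measurable M"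
proof -
  have "\<And>i. (\<lambda>x. g ((T^^i) x)) \<in> borel_measurable M"
    using measurable_compose[OF measurable_compose_n[OF T] g] by (simp add: comp_def)
  then show ?thesis unfolding avg_def by measurable
qed

lemma Lsup_meas:
  assumes "\<And>n. (\<lambda>x. u x n) \<in> borel_measurable M"
  shows "(\<lambda>x. Lsup (u x)) \<in> borel_measurable M"
  unfolding Lsup_def using assms by measurable


lemma one_sided:
  fixes g :: "'a \<Rightarrow> real"
  assumes sp: "space M = UNIV" and T: "T \<in> M \<rightarrow>\<^sub>M M" and pres: "distr M M T = M"
    and gm: "g \<in> borel_measurable M" and g: "\<And>x. 0 \<le> g x \<and> g x \<le> 1"
  shows "(\<integral>x. Lsup (avg T g x) \<partial>M) \<le> (\<integral>x. g x \<partial>M)"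
proof (rule field_le_epsilon)
  fix e :: real assume e: "e > 0"
  note [measurable] = gm
  define H where "H x = Lsup (avg T g x)" for x
  have Hb: "0 \<le> H x \<and> H x \<le> 1" for x
    using Lsup_ereal(2,3)[of "avg T g x", OF avg_bounds[OF g]] unfolding H_def by auto
  have Hinv: "H (T x) = H x" for x unfolding H_def by (rule Lsup_avg_inv[OF g])
  have avgm[measurable]: "(\<lambda>x. avg T g x n) \<in> borel_measurable M" for n by (rule avg_meas[OF T gm])
  have Hm[measurable]: "H \<in> borel_measurable M" unfolding H_def by (rule Lsup_meas) (rule avgm)
  define B where "B N = {x \<in> space M. \<forall>n\<in>{1..N}. avg T g x n < H x - e/4}" for N
  have Bm[measurable]: "B N \<in> sets M" for N unfolding B_def by measurable
  have dec: "decseq B" by (rule decseq_SucI) (auto simp: B_def)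
  have empty: "\<Inter>(range B) = {}"
  proof -
    have "x \<notin> B (SOME n. n \<ge> 1 \<and> avg T g x n \<ge> H x - e/4)" for x
    proof -
      obtain n where n: "n \<ge> 1" "avg T g x n \<ge> H x - e/4"
        using Lsup_avg_ex[where g=g and e="e/4" and T=T and x=x] g e unfolding H_def by auto
      then have "(SOME n. n \<ge> 1 \<and> avg T g x n \<ge> H x - e/4) \<ge> 1 \<and>
          avg T g x (SOME n. n \<ge> 1 \<and> avg T g x n \<ge> H x - e/4) \<ge> H x - e/4"
        by (intro someI[of "\<lambda>n. n \<ge> 1 \<and> avg T g x n \<ge> H x - e/4"]) auto
      then show ?thesis unfolding B_def by force
    qed
    then show ?thesis by blast
  qed
  have "(\<lambda>N. measure M (B N)) \<longlonglongrightarrow> measure M (\<Inter>(range B))"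
    by (rule finite_Lim_measure_decseq) (use dec in auto)
  then have lim: "(\<lambda>N. measure M (B N)) \<longlonglongrightarrow> 0" using empty by simp
  obtain N0 where N0: "\<And>N. N \<ge> N0 \<Longrightarrow> measure M (B N) < e/2"
    using LIMSEQ_D[OF lim, of "e/2"] e by auto
  define N where "N = Suc N0"
  have BN: "measure M (B N) < e/2" using N0 N_def by simp
  define c where "c x = max (H x - e/4) 0" for x
  define \<phi> where "\<phi> x = max (g x) (indicator (B N) x)" for x
  have cm[measurable]: "c \<in> borel_measurable M" unfolding c_def by measurable
  have phim[measurable]: "\<phi> \<in> borel_measurable M" unfolding \<phi>_def by measurable
  have cb: "0 \<le> c x \<and> c x \<le> 1" for x using Hb[of x] e unfolding c_def by auto
  have phib: "0 \<le> \<phi> x \<and> \<phi> x \<le> 1" for x using g[of x] unfolding \<phi>_def by (auto simp: indicator_def)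
  have ex: "\<exists>k. 1 \<le> k \<and> k \<le> N \<and> (\<Sum>i<k. \<phi> ((T^^i) x)) \<ge> real k * c x" for x
  proof (cases "x \<in> B N")
    case True
    then have "\<phi> x = 1" using g[of x] unfolding \<phi>_def by auto
    then show ?thesis using cb[of x] N_def by (intro exI[of _ 1]) auto
  next
    case False
    then obtain n where n: "n \<in> {1..N}" "\<not> avg T g x n < H x - e/4"
      unfolding B_def using sp by auto
    have "real n * (H x - e/4) \<le> (\<Sum>i<n. g ((T^^i) x))"
    proof -
      have "H x - e/4 \<le> (\<Sum>i<n. g ((T^^i) x)) / real n" using n(2) unfolding avg_def by simp
      moreover have "real n > 0" using n(1) by simp
      ultimately show ?thesis by (simp add: le_divide_eq mult.commute)
    qed
    moreover have "0 \<le> (\<Sum>i<n. g ((T^^i) x))" by (rule sum_nonneg) (use g in auto)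
    ultimately have "real n * c x \<le> (\<Sum>i<n. g ((T^^i) x))"
      unfolding c_def by (auto simp: max_def)
    also have "\<dots> \<le> (\<Sum>i<n. \<phi> ((T^^i) x))" by (rule sum_mono) (auto simp: \<phi>_def)
    finally show ?thesis using n by auto
  qed
  have blk: "(real L - real N) * c x \<le> (\<Sum>i<L. \<phi> ((T^^i) x))" for L x
    by (rule block[where T=T]) (use phib cb ex in \<open>auto simp: c_def Hinv\<close>)
  have phiT[measurable]: "(\<lambda>x. \<phi> ((T^^i) x)) \<in> borel_measurable M" for i
    using measurable_compose[OF measurable_compose_n[OF T] phim] by (simp add: comp_def)
  have intc: "integrable M c" by (rule bint[where B=1]) (use cb in auto)
  have intphi: "integrable M \<phi>" by (rule bint[where B=1]) (use phib in auto)
  have intphiT: "integrable M (\<lambda>x. \<phi> ((T^^i) x))" for i by (rule bint[where B=1]) (use phib in auto)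
  have I1: "(real L - real N) * (\<integral>x. c x \<partial>M) \<le> real L * (\<integral>x. \<phi> x \<partial>M)" for L
  proof -
    have "(real L - real N) * (\<integral>x. c x \<partial>M) = (\<integral>x. (real L - real N) * c x \<partial>M)" by simp
    also have "\<dots> \<le> (\<integral>x. (\<Sum>i<L. \<phi> ((T^^i) x)) \<partial>M)"
      by (rule integral_mono) (use intc intphiT blk in auto)
    also have "\<dots> = (\<Sum>i<L. (\<integral>x. \<phi> ((T^^i) x) \<partial>M))"
      by (rule Bochner_Integration.integral_sum[where I="{..<L}" and f= "\<lambda>i x. \<phi> ((T^^i) x)"]) (use intphiT in auto)
    also have "\<dots> = (\<Sum>i<L. (\<integral>x. \<phi> x \<partial>M))"
      using integral_funpow[OF T pres phim] by simp
    also have "\<dots> = real L * (\<integral>x. \<phi> x \<partial>M)" by simp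
    finally show ?thesis .
  qed
  have c1: "(\<integral>x. c x \<partial>M) \<le> 1"
  proof -
    have "(\<integral>x. c x \<partial>M) \<le> (\<integral>x. 1 \<partial>M)" by (rule integral_mono) (use intc cb in auto)
    then show ?thesis by (simp add: prob_space)
  qed
  have I2: "(\<integral>x. c x \<partial>M) \<le> (\<integral>x. \<phi> x \<partial>M)"
  proof (rule ccontr)
    assume "\<not> ?thesis"
    then have d: "(\<integral>x. c x \<partial>M) - (\<integral>x. \<phi> x \<partial>M) > 0" by simp
    obtain L :: nat where L: "real N / ((\<integral>x. c x \<partial>M) - (\<integral>x. \<phi> x \<partial>M)) < real L"
      using reals_Archimedean2 by blast
    have "real N < real L * ((\<integral>x. c x \<partial>M) - (\<integral>x. \<phi> x \<partial>M))"
      using L d by (simp add: pos_divide_less_eq)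
    also have "\<dots> \<le> real N * (\<integral>x. c x \<partial>M)" using I1[of L] by (simp add: algebra_simps)
    also have "\<dots> \<le> real N" using c1 by (simp add: mult_left_le)
    finally show False by simp
  qed
  have I3: "(\<integral>x. \<phi> x \<partial>M) \<le> (\<integral>x. g x \<partial>M) + measure M (B N)"
  proof -
    have intg: "integrable M g" by (rule bint[where B=1]) (use g in auto)
    have intB: "integrable M (indicator (B N) :: 'a \<Rightarrow> real)" by (rule bint[where B=1]) auto
    have "(\<integral>x. \<phi> x \<partial>M) \<le> (\<integral>x. g x + indicator (B N) x \<partial>M)"
      by (rule integral_mono[OF intphi Bochner_Integration.integrable_add[OF intg intB]])
        (use g in \<open>auto simp: \<phi>_def indicator_def\<close>)
    also have "\<dots> = (\<integral>x. g x \<partial>M) + (\<integral>x. indicator (B N) x \<partial>M)"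
      by (rule Bochner_Integration.integral_add[OF intg intB])
    also have "(\<integral>x. indicator (B N) x \<partial>M) = measure M (B N)" by simp
    finally show ?thesis .
  qed
  have I4: "(\<integral>x. H x \<partial>M) \<le> (\<integral>x. c x \<partial>M) + e/4"
  proof -
    have intH: "integrable M H" by (rule bint[where B=1]) (use Hb in auto)
    have "(\<integral>x. H x \<partial>M) \<le> (\<integral>x. c x + e/4 \<partial>M)"
      by (rule integral_mono) (use intH intc in \<open>auto simp: c_def\<close>)
    also have "\<dots> = (\<integral>x. c x \<partial>M) + e/4" using intc by (simp add: prob_space)
    finally show ?thesis .
  qed
  show "(\<integral>x. Lsup (avg T g x) \<partial>M) \<le> (\<integral>x. g x \<partial>M) + e"
    using I2 I3 I4 BN e unfolding H_def[symmetric] by linarith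
qed


end

definition tw :: "('x \<Rightarrow> 'x) \<Rightarrow> ('x \<Rightarrow> 'x) \<Rightarrow> ('x \<Rightarrow> real) \<Rightarrow> 'x \<Rightarrow> nat \<Rightarrow> real" where
  "tw T U g x n = ((\<Sum>i<Suc n. g ((T^^i) x)) + (\<Sum>i<Suc n. g ((U^^i) x)) - g x) / (2 * real n + 1)"

lemma sum_Suc_ge0:
  assumes "\<And>x. 0 \<le> g x \<and> g x \<le> 1"
  shows "g x \<le> (\<Sum>i<Suc n. g ((U^^i) x))" "(\<Sum>i<Suc n. g ((U^^i) x)) \<le> g x + real n"
proof -
  have e: "(\<Sum>i<Suc n. g ((U^^i) x)) = g x + (\<Sum>i<n. g ((U^^Suc i) x))"
    by (subst sum.lessThan_Suc_shift) simp
  moreover have "0 \<le> (\<Sum>i<n. g ((U^^Suc i) x))" by (rule sum_nonneg) (use assms in auto)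
  ultimately show "g x \<le> (\<Sum>i<Suc n. g ((U^^i) x))" by simp
  have "(\<Sum>i<n. g ((U^^Suc i) x)) \<le> (\<Sum>i<n. 1)" by (rule sum_mono) (use assms in auto)
  then show "(\<Sum>i<Suc n. g ((U^^i) x)) \<le> g x + real n" using e by simp
qed

lemma tw_bounds:
  assumes g: "\<And>x. 0 \<le> g x \<and> g x \<le> 1"
  shows "0 \<le> tw T U g x n \<and> tw T U g x n \<le> 1"
proof -
  have a: "g x \<le> (\<Sum>i<Suc n. g ((U^^i) x))" "(\<Sum>i<Suc n. g ((U^^i) x)) \<le> g x + real n"
    "g x \<le> (\<Sum>i<Suc n. g ((T^^i) x))" "(\<Sum>i<Suc n. g ((T^^i) x)) \<le> g x + real n"
    using sum_Suc_ge0[of g, OF g] by auto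
  have "0 \<le> (\<Sum>i<Suc n. g ((T^^i) x)) + (\<Sum>i<Suc n. g ((U^^i) x)) - g x" using a g[of x] by linarith
  moreover have "(\<Sum>i<Suc n. g ((T^^i) x)) + (\<Sum>i<Suc n. g ((U^^i) x)) - g x \<le> 2 * real n + 1"
    using a g[of x] by linarith
  ultimately show ?thesis unfolding tw_def by (auto simp: divide_le_eq)
qed

lemma tw_compl:
  "tw T U (\<lambda>x. 1 - g x) x n = 1 - tw T U g x n"
proof -
  have "2 * real n + 1 > 0" by simp
  then show ?thesis unfolding tw_def by (simp add: sum_subtractf field_simps)
qed

lemma frac_split: "a > 0 \<Longrightarrow> S / a = S / (a + 1) + S / (a * (a + 1))" for a S :: real
proof -
  assume a: "a > 0"
  have "S / a - S / (a + 1) = (S * (a + 1) - S * a) / (a * (a + 1))"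
    by (rule diff_frac_eq) (use a in auto)
  also have "S * (a + 1) - S * a = S" by (simp add: algebra_simps)
  finally show ?thesis by simp
qed

lemma frac_aux:
  fixes S :: real and n :: nat
  assumes "0 \<le> S" "S \<le> 2 * real n + 2" and that: "0 \<le> a"
  shows "(S - a) / (2 * real n + 1) \<le> S / (2 * real n + 2) + 1 / (2 * real n + 1)"
proof -
  have "(S - a) / (2 * real n + 1) \<le> S / (2 * real n + 1)" using that by (simp add: divide_right_mono)
  also have "S / (2 * real n + 1) = S / (2 * real n + 2) + S / ((2 * real n + 1) * (2 * real n + 2))"
    using frac_split[of "2 * real n + 1" S] by (simp add: add.assoc)
  also have "S / ((2 * real n + 1) * (2 * real n + 2)) \<le> (2 * real n + 2) / ((2 * real n + 1) * (2 * real n + 2))"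
    by (intro divide_right_mono) (use assms in auto)
  also have "\<dots> = 1 / (2 * real n + 1)" by simp
  finally show ?thesis by simp
qed

lemma Lsup_tw_le:
  assumes g: "\<And>x. 0 \<le> g x \<and> g x \<le> 1"
  shows "Lsup (tw T U g x) \<le> (Lsup (avg T g x) + Lsup (avg U g x)) / 2"
proof -
  define v where "v n = (avg T g x (Suc n) + avg U g x (Suc n)) / 2" for n
  have vb: "0 \<le> v n \<and> v n \<le> 1" for n
    using avg_bounds[of g T x "Suc n", OF g] avg_bounds[of g U x "Suc n", OF g] unfolding v_def by auto
  have "Lsup (tw T U g x) \<le> Lsup v"
  proof (rule Lsup_mono_approx[OF tw_bounds[OF g] vb])
    fix e :: real assume e: "e > 0"
    have "eventually (\<lambda>n. 1 / real n < e) sequentially"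
      using order_tendstoD(2)[OF lim_const_over_n[of 1] e] by simp
    then have "eventually (\<lambda>n. 1 / real n < e \<and> n \<ge> 1) sequentially"
      using eventually_ge_at_top[of "1::nat"] by (intro eventually_conj) auto
    then show "eventually (\<lambda>n. tw T U g x n \<le> v n + e) sequentially"
    proof (rule eventually_mono)
      fix n assume n': "1 / real n < e \<and> n \<ge> 1"
      then have n: "1 / real n < e" and n1: "n \<ge> 1" by auto
      have a: "g x \<le> (\<Sum>i<Suc n. g ((U^^i) x))" "(\<Sum>i<Suc n. g ((U^^i) x)) \<le> g x + real n"
        "g x \<le> (\<Sum>i<Suc n. g ((T^^i) x))" "(\<Sum>i<Suc n. g ((T^^i) x)) \<le> g x + real n"
        using sum_Suc_ge0[of g, OF g] by auto
      have "tw T U g x n \<le> ((\<Sum>i<Suc n. g ((T^^i) x)) + (\<Sum>i<Suc n. g ((U^^i) x))) / (2 * real n + 2)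
          + 1 / (2 * real n + 1)"
        unfolding tw_def by (rule frac_aux) (use a g[of x] in auto)
      also have "((\<Sum>i<Suc n. g ((T^^i) x)) + (\<Sum>i<Suc n. g ((U^^i) x))) / (2 * real n + 2) = v n"
      proof -
        have "2 * real n + 2 = (real n + 1) * 2" by simp
        then show ?thesis unfolding v_def avg_def
          by (simp only: divide_divide_eq_left[symmetric] add_divide_distrib of_nat_Suc add.commute)
      qed
      also have "1 / (2 * real n + 1) \<le> e"
      proof (cases "n = 0")
        case True then show ?thesis using n1 by simp
      next
        case False
        then have "1 / (2 * real n + 1) \<le> 1 / real n" by (simp add: frac_le)
        then show ?thesis using n by simp
      qed
      finally show "tw T U g x n \<le> v n + e" by simp
    qed
  qed
  also have "Lsup v \<le> (Lsup (avg T g x) + Lsup (avg U g x)) / 2"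
  proof (rule field_le_epsilon)
    fix e :: real assume e: "e > 0"
    have "eventually (\<lambda>n. avg T g x n < Lsup (avg T g x) + e) sequentially"
      by (rule Lsup_less[OF avg_bounds[OF g]]) (use e in simp)
    then have 1: "eventually (\<lambda>n. avg T g x (Suc n) < Lsup (avg T g x) + e) sequentially"
      by (rule eventually_sequentially_Suc[THEN iffD2])
    have "eventually (\<lambda>n. avg U g x n < Lsup (avg U g x) + e) sequentially"
      by (rule Lsup_less[OF avg_bounds[OF g]]) (use e in simp)
    then have 2: "eventually (\<lambda>n. avg U g x (Suc n) < Lsup (avg U g x) + e) sequentially"
      by (rule eventually_sequentially_Suc[THEN iffD2])
    have "eventually (\<lambda>n. v n \<le> (Lsup (avg T g x) + Lsup (avg U g x)) / 2 + e) sequentially"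
      using 1 2 by eventually_elim (simp add: v_def field_simps)
    then show "Lsup v \<le> (Lsup (avg T g x) + Lsup (avg U g x)) / 2 + e" by (rule Lsup_le[OF vb])
  qed
  finally show ?thesis .
qed


context prob_space
begin

lemma tw_meas:
  assumes T: "T \<in> M \<rightarrow>\<^sub>M M" and U: "U \<in> M \<rightarrow>\<^sub>M M" and g: "g \<in> borel_measurable M"
  shows "(\<lambda>x. tw T U g x n) \<in> borel_measurable M"
proof -
  have [measurable]: "\<And>i. (\<lambda>x. g ((T^^i) x)) \<in> borel_measurable M"
    using measurable_compose[OF measurable_compose_n[OF T] g] by (simp add: comp_def)
  have [measurable]: "\<And>i. (\<lambda>x. g ((U^^i) x)) \<in> borel_measurable M"
    using measurable_compose[OF measurable_compose_n[OF U] g] by (simp add: comp_def)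
  note [measurable] = g
  show ?thesis unfolding tw_def by measurable
qed

lemma two_sided_le:
  fixes g :: "'a \<Rightarrow> real"
  assumes sp: "space M = UNIV" and T: "T \<in> M \<rightarrow>\<^sub>M M" and pT: "distr M M T = M"
    and U: "U \<in> M \<rightarrow>\<^sub>M M" and pU: "distr M M U = M"
    and gm: "g \<in> borel_measurable M" and g: "\<And>x. 0 \<le> g x \<and> g x \<le> 1"
  shows "(\<integral>x. Lsup (tw T U g x) \<partial>M) \<le> (\<integral>x. g x \<partial>M)"
proof -
  have m1: "(\<lambda>x. Lsup (tw T U g x)) \<in> borel_measurable M"
    by (rule Lsup_meas) (rule tw_meas[OF T U gm])
  have m2: "(\<lambda>x. Lsup (avg T g x)) \<in> borel_measurable M"
    by (rule Lsup_meas) (rule avg_meas[OF T gm])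
  have m3: "(\<lambda>x. Lsup (avg U g x)) \<in> borel_measurable M"
    by (rule Lsup_meas) (rule avg_meas[OF U gm])
  have i1: "integrable M (\<lambda>x. Lsup (tw T U g x))"
    by (rule bint[OF m1, where B=1]) (use Lsup_ereal(2,3)[OF tw_bounds[of g, OF g]] in auto)
  have i2: "integrable M (\<lambda>x. Lsup (avg T g x))"
    by (rule bint[OF m2, where B=1]) (use Lsup_ereal(2,3)[OF avg_bounds[of g, OF g]] in auto)
  have i3: "integrable M (\<lambda>x. Lsup (avg U g x))"
    by (rule bint[OF m3, where B=1]) (use Lsup_ereal(2,3)[OF avg_bounds[of g, OF g]] in auto)
  have "(\<integral>x. Lsup (tw T U g x) \<partial>M) \<le> (\<integral>x. (Lsup (avg T g x) + Lsup (avg U g x)) / 2 \<partial>M)"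
    by (rule integral_mono[OF i1]) (use i2 i3 Lsup_tw_le[of g, OF g] in auto)
  also have "\<dots> = ((\<integral>x. Lsup (avg T g x) \<partial>M) + (\<integral>x. Lsup (avg U g x) \<partial>M)) / 2"
    using i2 i3 by simp
  also have "\<dots> \<le> (\<integral>x. g x \<partial>M)"
    using one_sided[OF sp T pT gm g] one_sided[OF sp U pU gm g] by simp
  finally show ?thesis .
qed

lemma two_sided:
  fixes g :: "'a \<Rightarrow> real"
  assumes sp: "space M = UNIV" and T: "T \<in> M \<rightarrow>\<^sub>M M" and pT: "distr M M T = M"
    and U: "U \<in> M \<rightarrow>\<^sub>M M" and pU: "distr M M U = M"
    and gm: "g \<in> borel_measurable M" and g: "\<And>x. 0 \<le> g x \<and> g x \<le> 1"
  shows "(\<integral>x. Lsup (tw T U g x) \<partial>M) = (\<integral>x. g x \<partial>M)"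
proof (rule antisym)
  show "(\<integral>x. Lsup (tw T U g x) \<partial>M) \<le> (\<integral>x. g x \<partial>M)" by (rule two_sided_le[OF assms])
  define h where "h = (\<lambda>x. 1 - g x)"
  have hm: "h \<in> borel_measurable M" unfolding h_def using gm by measurable
  have h: "0 \<le> h x \<and> h x \<le> 1" for x using g[of x] by (auto simp: h_def)
  have le: "(\<integral>x. Lsup (tw T U h x) \<partial>M) \<le> (\<integral>x. h x \<partial>M)" by (rule two_sided_le[OF sp T pT U pU hm h])
  have m1: "(\<lambda>x. Lsup (tw T U g x)) \<in> borel_measurable M"
    by (rule Lsup_meas) (rule tw_meas[OF T U gm])
  have m2: "(\<lambda>x. Lsup (tw T U h x)) \<in> borel_measurable M"
    by (rule Lsup_meas) (rule tw_meas[OF T U hm])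
  have i1: "integrable M (\<lambda>x. Lsup (tw T U g x))"
    by (rule bint[OF m1, where B=1]) (use Lsup_ereal(2,3)[OF tw_bounds[of g, OF g]] in auto)
  have i2: "integrable M (\<lambda>x. Lsup (tw T U h x))"
    by (rule bint[OF m2, where B=1]) (use Lsup_ereal(2,3)[OF tw_bounds[of h, OF h]] in auto)
  have ig: "integrable M g" by (rule bint[OF gm, where B=1]) (use g in auto)
  have pw: "1 \<le> Lsup (tw T U g x) + Lsup (tw T U h x)" for x
    by (rule Lsup_sum_ge1[OF tw_bounds[of g, OF g] tw_bounds[of h, OF h]])
       (simp add: h_def tw_compl)
  have "(\<integral>x. 1 \<partial>M) \<le> (\<integral>x. Lsup (tw T U g x) + Lsup (tw T U h x) \<partial>M)"
    by (rule integral_mono) (use i1 i2 pw in auto)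
  also have "\<dots> = (\<integral>x. Lsup (tw T U g x) \<partial>M) + (\<integral>x. Lsup (tw T U h x) \<partial>M)"
    by (rule Bochner_Integration.integral_add[OF i1 i2])
  finally have "1 \<le> (\<integral>x. Lsup (tw T U g x) \<partial>M) + (\<integral>x. Lsup (tw T U h x) \<partial>M)"
    by (simp add: prob_space)
  moreover have "(\<integral>x. h x \<partial>M) = 1 - (\<integral>x. g x \<partial>M)"
    unfolding h_def using ig by (simp add: prob_space)
  ultimately show "(\<integral>x. g x \<partial>M) \<le> (\<integral>x. Lsup (tw T U g x) \<partial>M)" using le by linarith
qed

end


definition ishift :: "(int \<Rightarrow> 'a) \<Rightarrow> (int \<Rightarrow> 'a)" where
  "ishift x = (\<lambda>i. x (i - 1))"

lemma shift_ishift[simp]: "shift (ishift x) = x" "ishift (shift x) = x"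
  by (auto simp: shift_def ishift_def)

lemma topspace_shift_top[simp]: "topspace shift_top = UNIV"
  by (simp add: shift_top_def)

lemma cont_shift: "continuous_map shift_top shift_top shift"
  unfolding shift_top_def continuous_map_componentwise_UNIV
  by (auto simp: shift_def intro: continuous_map_product_projection)

lemma cont_ishift: "continuous_map shift_top shift_top ishift"
  unfolding shift_top_def continuous_map_componentwise_UNIV
  by (auto simp: ishift_def intro: continuous_map_product_projection)

lemma open_in_borel:
  assumes "sets M = shift_borel" "openin shift_top U"
  shows "U \<in> sets M"
  using assms unfolding shift_borel_def by (auto intro: sigma_sets.Basic)

lemma cont_meas:
  fixes M :: "(int \<Rightarrow> 'a) measure" and f :: "(int \<Rightarrow> 'a) \<Rightarrow> (int \<Rightarrow> 'a)"
  assumes sp: "space M = UNIV" and s: "sets M = shift_borel"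
    and f: "continuous_map shift_top shift_top f"
  shows "f \<in> M \<rightarrow>\<^sub>M M"
proof (rule measurable_sigma_sets[where \<Omega>=UNIV and A="{U. openin (shift_top :: (int \<Rightarrow> 'a) topology) U}"])
  show "sets M = sigma_sets UNIV {U. openin shift_top U}" using s by (simp add: shift_borel_def)
  show "{U. openin shift_top U} \<subseteq> Pow UNIV" by auto
  show "f \<in> space M \<rightarrow> UNIV" by auto
  fix y :: "(int \<Rightarrow> 'a) set" assume "y \<in> {U. openin shift_top U}"
  then have "openin shift_top {x \<in> topspace shift_top. f x \<in> y}"
    using openin_continuous_map_preimage[OF f] by auto
  then have "openin shift_top (f -` y)" by (simp add: vimage_def)
  then show "f -` y \<inter> space M \<in> sets M" using open_in_borel[OF s] sp by simp
qed

lemma coord_open: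
  fixes F :: "(int \<Rightarrow> 'a) \<Rightarrow> (int \<Rightarrow> 'a)"
  assumes f: "continuous_map shift_top shift_top F"
  shows "openin shift_top {x. F x i = a}"
proof -
  have p: "continuous_map shift_top (discrete_topology UNIV) (\<lambda>y::int \<Rightarrow> 'a. y i)"
    unfolding shift_top_def by (rule continuous_map_product_projection) auto
  have "continuous_map shift_top (discrete_topology UNIV) (\<lambda>x. F x i)"
    using continuous_map_compose[OF f p] by (simp add: comp_def)
  from openin_continuous_map_preimage[OF this, of "{a}"]
  show ?thesis by simp
qed

lemma CA_funpow:
  assumes "is_CA F" shows "F ((shift^^k) x) = (shift^^k) (F x)"
  using assms by (induction k) (auto simp: is_CA_def)

lemma CA_ishift:
  assumes "is_CA F" shows "F (ishift x) = ishift (F x)"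
proof -
  have "F x = shift (F (ishift x))" using assms unfolding is_CA_def by (metis shift_ishift(1))
  then show ?thesis by (metis shift_ishift(2))
qed

lemma CA_ifunpow:
  assumes "is_CA F" shows "F ((ishift^^k) x) = (ishift^^k) (F x)"
  using assms by (induction k) (auto simp: CA_ishift)

lemma shift_funpow_apply: "(shift^^k) y j = y (j + int k)"
  by (induction k arbitrary: j) (auto simp: shift_def algebra_simps)

lemma ishift_funpow_apply: "(ishift^^k) y j = y (j - int k)"
  by (induction k arbitrary: j) (auto simp: ishift_def algebra_simps)

lemma sym_sum:
  fixes f :: "int \<Rightarrow> real"
  shows "(\<Sum>i\<in>{-int n..int n}. f i) = (\<Sum>k<Suc n. f (int k)) + (\<Sum>k<Suc n. f (- int k)) - f 0"
proof (induction n)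
  case 0 then show ?case by simp
next
  case (Suc n)
  have "{- int (Suc n)..int (Suc n)} = insert (int n + 1) (insert (- int n - 1) {-int n..int n})"
    by auto
  then have "(\<Sum>i\<in>{- int (Suc n)..int (Suc n)}. f i) = f (int n + 1) + f (- int n - 1) + (\<Sum>i\<in>{-int n..int n}. f i)"
    by simp
  moreover have h: "- int n - 1 = - 1 - int n" by simp
  ultimately show ?case using Suc by (simp add: algebra_simps)
qed

lemma card_as_sum:
  "real (card {i::int. \<bar>i\<bar> \<le> int n \<and> P i}) = (\<Sum>i\<in>{-int n..int n}. if P i then 1 else 0)"
proof -
  have "{i::int. \<bar>i\<bar> \<le> int n \<and> P i} = {i \<in> {-int n..int n}. P i}" by auto
  then have "real (card {i::int. \<bar>i\<bar> \<le> int n \<and> P i}) = (\<Sum>i\<in>{i \<in> {-int n..int n}. P i}. 1)"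
    by simp
  also have "\<dots> = (\<Sum>i\<in>{-int n..int n}. if P i then 1 else 0)"
    by (rule sum.inter_filter) simp
  finally show ?thesis .
qed

theorem mainTheorem20:
  fixes M :: "(int \<Rightarrow> 'a::finite) measure"
    and c d :: "(int \<Rightarrow> 'a) \<Rightarrow> (int \<Rightarrow> 'a)"
  assumes "CARD('a) \<ge> 2"
    and "prob_space M"
    and "space M = UNIV"
    and "sets M = shift_borel"
    and "shift_invariant M"
    and "is_CA c" and "is_CA d"
  shows "(\<integral>x. besicovitch (c x) (d x) \<partial>M) = measure M {x. c x 0 \<noteq> d x 0}"
proof -
  interpret prob_space M by fact
  note sp = assms(3) and s = assms(4) and inv = assms(5)[unfolded shift_invariant_def]
  have Tm: "shift \<in> M \<rightarrow>\<^sub>M M" by (rule cont_meas[OF sp s cont_shift])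
  have Um: "ishift \<in> M \<rightarrow>\<^sub>M M" by (rule cont_meas[OF sp s cont_ishift])
  have pT: "distr M M shift = M"
  proof (rule measure_eqI)
    show "sets (distr M M shift) = sets M" by simp
    fix A assume "A \<in> sets (distr M M shift)"
    then have A: "A \<in> sets M" by simp
    have C: "shift -` A \<in> sets M" using measurable_sets[OF Tm A] sp by simp
    have "shift ` (shift -` A) = A" by (auto simp: image_iff) (metis shift_ishift(1))
    then have "emeasure M A = emeasure M (shift -` A)" using inv C by metis
    then show "emeasure (distr M M shift) A = emeasure M A"
      using emeasure_distr[OF Tm A] sp by simp
  qed
  have pU: "distr M M ishift = M"
  proof (rule measure_eqI)
    show "sets (distr M M ishift) = sets M" by simp
    fix A assume "A \<in> sets (distr M M ishift)"
    then have A: "A \<in> sets M" by simp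
    have "ishift -` A = shift ` A"
    proof (intro set_eqI iffI)
      fix x assume "x \<in> ishift -` A"
      then show "x \<in> shift ` A" using image_eqI[of x shift "ishift x" A] by simp
    next
      fix x assume "x \<in> shift ` A" then show "x \<in> ishift -` A" by auto
    qed
    then have "emeasure M (ishift -` A) = emeasure M A" using inv A by metis
    then show "emeasure (distr M M ishift) A = emeasure M A"
      using emeasure_distr[OF Um A] sp by simp
  qed
  define E where "E = {x. c x 0 \<noteq> d x 0}"
  have Em: "E \<in> sets M"
  proof -
    have e: "E = (\<Union>a. \<Union>b\<in>-{a}. {x. c x 0 = a} \<inter> {x. d x 0 = b})" unfolding E_def by auto
    have X: "{x. c x 0 = a} \<inter> {x. d x 0 = b} \<in> sets M" for a b
      using open_in_borel[OF s coord_open] assms(6,7) unfolding is_CA_def by auto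
    have "(\<Union>a. \<Union>b\<in>-{a}. {x. c x 0 = a} \<inter> {x. d x 0 = b}) \<in> sets M"
      by (rule sets.finite_UN, simp, rule sets.finite_UN, simp, rule X)
    then show ?thesis using e by simp
  qed
  define g :: "(int \<Rightarrow> 'a) \<Rightarrow> real" where "g = indicator E"
  have gm: "g \<in> borel_measurable M" unfolding g_def using Em by simp
  have gb: "0 \<le> g x \<and> g x \<le> 1" for x by (simp add: g_def indicator_def)
  have main: "(\<integral>x. Lsup (tw shift ishift g x) \<partial>M) = (\<integral>x. g x \<partial>M)"
    by (rule two_sided[OF sp Tm pT Um pU gm gb])
  have eq: "besicovitch (c x) (d x) = Lsup (tw shift ishift g x)" for x
  proof -
    define f where "f i = (if c x i \<noteq> d x i then 1 else 0 :: real)" for i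
    have g1: "g ((shift^^k) x) = f (int k)" for k
      using CA_funpow[OF assms(6)] CA_funpow[OF assms(7)]
      by (simp add: g_def E_def f_def shift_funpow_apply indicator_def)
    have g2: "g ((ishift^^k) x) = f (- int k)" for k
      using CA_ifunpow[OF assms(6)] CA_ifunpow[OF assms(7)]
      by (simp add: g_def E_def f_def ishift_funpow_apply indicator_def)
    have g0: "g x = f 0" by (simp add: g_def E_def f_def indicator_def)
    have "real (card {i::int. \<bar>i\<bar> \<le> int n \<and> c x i \<noteq> d x i}) / (2 * real n + 1) = tw shift ishift g x n" for n
      unfolding tw_def card_as_sum g1 g2 g0 sym_sum f_def by simp
    then show ?thesis unfolding besicovitch_def Lsup_def by simp
  qed
  have "(\<integral>x. besicovitch (c x) (d x) \<partial>M) = (\<integral>x. g x \<partial>M)" using main eq by simp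
  also have "\<dots> = measure M E" unfolding g_def using Em by simp
  finally show ?thesis unfolding E_def .
qed

end
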